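(* For a Polish group $G$, every $K_\sigma$ subgroup of $G$ is compactly generated if and only if every countable subgroup of $G$ is compactly generated.
   Context: A subgroup $H$ of a topological group $G$ is compactly generated if $H=\langle K\rangle$ (the subgroup generated by $K$) for some compact $K\subseteq G$; it is $K_\sigma$ if it is a countable union of compact sets. *)

theory Defs
  imports "HOL-Analysis.Analysis" "HOL-Algebra.Generated_Groups"
begin

definition topological_group :: "('a, 'b) monoid_scheme \<Rightarrow> 'a topology \<Rightarrow> bool" where
  "topological_group G X \<longleftrightarrow>
     group G \<and> topspace X = carrier G \<and>
     continuous_map (prod_topology X X) X (\<lambda>(x, y). mult G x y) \<and>
     continuous_map X X (\<lambda>x. m_inv G x)"

definition Polish_space :: "'a topology \<Rightarrow> bool" where
  "Polish_space X \<longleftrightarrow> completely_metrizable_space X \<and> separable_space X"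

definition Polish_group :: "('a, 'b) monoid_scheme \<Rightarrow> 'a topology \<Rightarrow> bool" where
  "Polish_group G X \<longleftrightarrow> topological_group G X \<and> Polish_space X"

definition compactly_generated :: "('a, 'b) monoid_scheme \<Rightarrow> 'a topology \<Rightarrow> 'a set \<Rightarrow> bool" where
  "compactly_generated G X H \<longleftrightarrow>
     (\<exists>K. K \<subseteq> carrier G \<and> compactin X K \<and> H = generate G K)"

definition K_sigma :: "'a topology \<Rightarrow> 'a set \<Rightarrow> bool" where
  "K_sigma X H \<longleftrightarrow> (\<exists>K :: nat \<Rightarrow> 'a set. (\<forall>n. compactin X (K n)) \<and> H = (\<Union>n. K n))"

end

theory Submission
  imports Defs
begin

fun gen_lvl :: "('a, 'b) monoid_scheme \<Rightarrow> 'a set \<Rightarrow> nat \<Rightarrow> 'a set" where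
  "gen_lvl G F 0 = insert \<one>\<^bsub>G\<^esub> (F \<union> (\<lambda>x. inv\<^bsub>G\<^esub> x) ` F)"
| "gen_lvl G F (Suc n) = gen_lvl G F n \<union> (\<lambda>(a, b). a \<otimes>\<^bsub>G\<^esub> b) ` (gen_lvl G F n \<times> gen_lvl G F n)"

lemma gen_lvl_mono: "m \<le> n \<Longrightarrow> gen_lvl G F m \<subseteq> gen_lvl G F n"
  by (induction n) (auto simp: le_Suc_eq)

lemma gen_lvl_countable: "countable F \<Longrightarrow> countable (gen_lvl G F n)"
  by (induction n) auto

lemma countable_generate:
  assumes "countable F" shows "countable (generate G F)"
proof -
  have "generate G F \<subseteq> (\<Union>n. gen_lvl G F n)"
  proof
    fix x assume "x \<in> generate G F"
    then show "x \<in> (\<Union>n. gen_lvl G F n)"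
    proof induction
      case (eng h1 h2)
      then obtain i j where "h1 \<in> gen_lvl G F i" "h2 \<in> gen_lvl G F j" by auto
      then have "h1 \<in> gen_lvl G F (max i j)" "h2 \<in> gen_lvl G F (max i j)"
        using gen_lvl_mono[of i "max i j" G F] gen_lvl_mono[of j "max i j" G F] by auto
      then have "h1 \<otimes>\<^bsub>G\<^esub> h2 \<in> gen_lvl G F (Suc (max i j))" by auto
      then show ?case by blast
    qed (auto intro: exI[of _ 0])
  qed
  moreover have "countable (\<Union>n. gen_lvl G F n)"
    using gen_lvl_countable[OF assms] by auto
  ultimately show ?thesis using countable_subset by blast
qed

lemma lmult_cont:
  assumes "topological_group G X" "a \<in> carrier G"
  shows "continuous_map X X (\<lambda>y. a \<otimes>\<^bsub>G\<^esub> y)"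
proof -
  have c: "continuous_map (prod_topology X X) X (\<lambda>(x, y). x \<otimes>\<^bsub>G\<^esub> y)"
    and ts: "topspace X = carrier G"
    using assms(1) unfolding topological_group_def by auto
  have "continuous_map X (prod_topology X X) (\<lambda>y. (a, y))"
    by (intro continuous_map_pairedI) (auto simp: ts assms(2))
  from continuous_map_compose[OF this c] show ?thesis by (simp add: o_def)
qed

lemma forward:
  assumes "Polish_group G X" "\<forall>H. subgroup H G \<and> K_sigma X H \<longrightarrow> compactly_generated G X H"
    "subgroup H G" "countable H"
  shows "compactly_generated G X H"
proof -
  have ts: "topspace X = carrier G"
    using assms(1) unfolding Polish_group_def topological_group_def by auto
  have ne: "H \<noteq> {}" using subgroup.one_closed[OF assms(3)] by auto
  have "K_sigma X H"
    unfolding K_sigma_def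
  proof (intro exI conjI allI)
    show "compactin X {from_nat_into H n}" for n
      using from_nat_into[OF ne, of n] subgroup.subset[OF assms(3)] ts by auto
    show "H = (\<Union>n. {from_nat_into H n})"
      using range_from_nat_into[OF ne assms(4)] by auto
  qed
  with assms(2,3) show ?thesis by simp
qed

lemma backward:
  fixes G :: "('a, 'b) monoid_scheme" (structure) and X :: "'a topology"
  assumes P: "Polish_group G X" and hyp: "\<forall>H. subgroup H G \<and> countable H \<longrightarrow> compactly_generated G X H"
    and sH: "subgroup H G" and KH: "K_sigma X H"
  shows "compactly_generated G X H"
proof -
  have TG: "topological_group G X" and grp: "group G" and ts: "topspace X = carrier G"
    and cinv: "continuous_map X X (\<lambda>x. inv\<^bsub>G\<^esub> x)"
    using P unfolding Polish_group_def topological_group_def by auto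
  interpret group G by (rule grp)
  obtain Mm d where Md: "Metric_space Mm d" "Metric_space.mtopology Mm d = X"
    using P unfolding Polish_group_def Polish_space_def
    using completely_metrizable_imp_metrizable_space metrizable_space_def by metis
  interpret Metric_space Mm d by (rule Md(1))
  have X: "X = mtopology" using Md(2) by simp
  have MG: "Mm = carrier G" using ts X by simp
  obtain Kn :: "nat \<Rightarrow> 'a set" where Kc: "\<And>n. compactin X (Kn n)" and HK: "H = (\<Union>n. Kn n)"
    using KH unfolding K_sigma_def by blast
  have Hc: "H \<subseteq> carrier G" using sH subgroup.subset by blast
  define r where "r n = 1 / real (Suc n)" for n
  have rpos: "r n > 0" for n by (simp add: r_def)
  have "\<exists>F. finite F \<and> F \<subseteq> Kn n \<and> (\<forall>y\<in>Kn n. \<exists>f\<in>F. inv f \<otimes> y \<in> mball \<one> (r n))" for n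
  proof -
    define U where "U x = {y \<in> topspace X. inv x \<otimes> y \<in> mball \<one> (r n)}" for x
    have KnG: "Kn n \<subseteq> carrier G" using HK Hc by auto
    have op: "openin X (U x)" if "x \<in> Kn n" for x
    proof -
      have "continuous_map X X (\<lambda>y. inv x \<otimes> y)"
        using lmult_cont[OF TG] that KnG by auto
      from openin_continuous_map_preimage[OF this, of "mball \<one> (r n)"]
      show ?thesis by (simp add: U_def X)
    qed
    have cov: "Kn n \<subseteq> \<Union>(U ` Kn n)"
    proof
      fix y assume y: "y \<in> Kn n"
      then have yG: "y \<in> carrier G" using KnG by blast
      then have "inv y \<otimes> y = \<one>" by simp
      moreover have "\<one> \<in> Mm" using MG by simp
      ultimately have "y \<in> U y" using yG ts rpos[of n] unfolding U_def by simp
      then show "y \<in> \<Union>(U ` Kn n)" using y by blast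
    qed
    obtain V where V: "finite V" "V \<subseteq> U ` Kn n" "Kn n \<subseteq> \<Union>V"
      using Kc[of n] op cov unfolding compactin_def by blast
    obtain F where F: "F \<subseteq> Kn n" "finite F" "V = U ` F"
      using finite_subset_image[OF V(1,2)] by blast
    show ?thesis
      using F V(3) by (intro exI[of _ F]) (auto simp: U_def)
  qed
  then obtain Fs where Fs: "\<And>n. finite (Fs n)" "\<And>n. Fs n \<subseteq> Kn n"
    "\<And>n y. y \<in> Kn n \<Longrightarrow> \<exists>f\<in>Fs n. inv f \<otimes> y \<in> mball \<one> (r n)"
    by metis
  define Mn where "Mn n = (\<Union>f\<in>Fs n. (\<lambda>y. inv f \<otimes> y) ` Kn n) \<inter> mcball \<one> (r n)" for n
  define Ms where "Ms = insert \<one> (\<Union>n. Mn n)"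
  define C where "C = generate G (\<Union>n. Fs n)"
  have FH: "(\<Union>n. Fs n) \<subseteq> H" using Fs(2) HK by blast
  have FG: "(\<Union>n. Fs n) \<subseteq> carrier G" using FH Hc by blast
  have "countable C" unfolding C_def
    by (rule countable_generate) (use Fs(1) in \<open>simp add: countable_finite\<close>)
  moreover have "subgroup C G" unfolding C_def by (rule generate_is_subgroup[OF FG])
  ultimately obtain K where K: "K \<subseteq> carrier G" "compactin X K" "C = generate G K"
    using hyp unfolding compactly_generated_def by blast
  have CH: "C \<subseteq> H" unfolding C_def by (rule generate_subgroup_incl[OF FH sH])
  have KsubC: "K \<subseteq> C" using K(3) incl[of _ K G] by blast
  have MnH: "Mn n \<subseteq> H" for n
  proof
    fix z assume "z \<in> Mn n"
    then obtain f y where "f \<in> Fs n" "y \<in> Kn n" "z = inv f \<otimes> y" by (auto simp: Mn_def)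
    moreover have "f \<in> H" "y \<in> H" using calculation Fs(2) HK by auto
    ultimately show "z \<in> H" using sH by (simp add: subgroup.m_closed subgroup.m_inv_closed)
  qed
  have MsH: "Ms \<subseteq> H" using MnH subgroup.one_closed[OF sH] by (auto simp: Ms_def)
  have Mnc: "compactin X (Mn n)" for n
  proof -
    have "compactin X (\<Union>f\<in>Fs n. (\<lambda>y. inv f \<otimes> y) ` Kn n)"
    proof (rule compactin_Union)
      show "finite ((\<lambda>f. (\<lambda>y. inv f \<otimes> y) ` Kn n) ` Fs n)" using Fs(1) by simp
      fix S assume "S \<in> (\<lambda>f. (\<lambda>y. inv f \<otimes> y) ` Kn n) ` Fs n"
      then obtain f where f: "f \<in> Fs n" "S = (\<lambda>y. inv f \<otimes> y) ` Kn n" by blast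
      have "f \<in> carrier G" using f(1) FG by blast
      have "continuous_map X X (\<lambda>y. inv f \<otimes> y)" using lmult_cont[OF TG] \<open>f \<in> carrier G\<close> by simp
      then have "compactin X ((\<lambda>y. inv f \<otimes> y) ` Kn n)" using image_compactin Kc by blast
      then show "compactin X S" using f(2) by simp
    qed
    then show ?thesis unfolding Mn_def by (rule compact_Int_closedin) (simp add: X)
  qed
  have MnG: "Mn n \<subseteq> mcball \<one> (r n)" for n unfolding Mn_def by blast
  have Msc: "compactin X Ms"
    unfolding compactin_def
  proof (intro conjI allI impI)
    have "Mn n \<subseteq> topspace X" for n using MnG[of n] mcball_subset_mspace MG ts by blast
    moreover have "\<one> \<in> topspace X" using ts by simp
    ultimately show "Ms \<subseteq> topspace X" unfolding Ms_def by blast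
    fix \<U> assume U: "(\<forall>B\<in>\<U>. openin X B) \<and> Ms \<subseteq> \<Union>\<U>"
    have "\<one> \<in> Ms" unfolding Ms_def by blast
    then obtain B0 where B0: "B0 \<in> \<U>" "\<one> \<in> B0" using U by blast
    have "openin mtopology B0" using U B0(1) X by blast
    then obtain e where e: "e > 0" "mball \<one> e \<subseteq> B0"
      using B0(2) unfolding openin_mtopology by blast
    obtain N where N: "N > 0" "inverse (real N) < e" using ex_inverse_of_nat_less[OF e(1)] by blast
    have big: "Mn m \<subseteq> B0" if "m \<ge> N" for m
    proof -
      have "r m \<le> inverse (real N)" unfolding r_def using N(1) that by (simp add: divide_simps)
      then have "r m < e" using N(2) by linarith
      then have "mcball \<one> (r m) \<subseteq> B0" using e mcball_subset_mball_concentric by blast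
      then show ?thesis using MnG[of m] by blast
    qed
    have cN: "compactin X (\<Union>m<N. Mn m)" by (rule compactin_Union) (auto simp: Mnc)
    have sN: "(\<Union>m<N. Mn m) \<subseteq> \<Union>\<U>" using U unfolding Ms_def by blast
    have "\<forall>B\<in>\<U>. openin X B" using U by blast
    then obtain V where V: "finite V" "V \<subseteq> \<U>" "(\<Union>m<N. Mn m) \<subseteq> \<Union>V"
      using cN sN unfolding compactin_def by blast
    show "\<exists>F. finite F \<and> F \<subseteq> \<U> \<and> Ms \<subseteq> \<Union>F"
    proof (intro exI conjI)
      show "finite (insert B0 V)" using V by simp
      show "insert B0 V \<subseteq> \<U>" using V B0 by simp
      show "Ms \<subseteq> \<Union>(insert B0 V)"
      proof
        fix z assume "z \<in> Ms"
        then consider "z = \<one>" | m where "z \<in> Mn m" unfolding Ms_def by blast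
        then show "z \<in> \<Union>(insert B0 V)"
        proof cases
          case 1 then show ?thesis using B0 by blast
        next
          case (2 m)
          show ?thesis
          proof (cases "m < N")
            case True then show ?thesis using 2 V(3) by blast
          next
            case False then show ?thesis using 2 big[of m] by auto
          qed
        qed
      qed
    qed
  qed
  show ?thesis unfolding compactly_generated_def
  proof (intro exI conjI)
    show KMG: "K \<union> Ms \<subseteq> carrier G" using K(1) MsH Hc by auto
    show "compactin X (K \<union> Ms)" using K(2) Msc by (rule compactin_Un)
    show "H = generate G (K \<union> Ms)"
    proof
      show "generate G (K \<union> Ms) \<subseteq> H"
        using generate_subgroup_incl[OF _ sH] KsubC CH MsH by blast
      show "H \<subseteq> generate G (K \<union> Ms)"
      proof
        fix x assume "x \<in> H"
        then obtain n where xn: "x \<in> Kn n" using HK by auto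
        then obtain f where f: "f \<in> Fs n" "inv f \<otimes> x \<in> mball \<one> (r n)" using Fs(3) by blast
        have fG: "f \<in> carrier G" "x \<in> carrier G" using f(1) FG xn HK Hc by auto
        have "inv f \<otimes> x \<in> Mn n" using f xn mball_subset_mcball by (auto simp: Mn_def)
        then have y: "inv f \<otimes> x \<in> generate G (K \<union> Ms)" by (intro incl) (auto simp: Ms_def)
        have "f \<in> C" using f(1) unfolding C_def by (auto intro: incl)
        then have "f \<in> generate G (K \<union> Ms)" using K(3) mono_generate[of K "K \<union> Ms"] by auto
        from eng[OF this y] have "f \<otimes> (inv f \<otimes> x) \<in> generate G (K \<union> Ms)" .
        moreover have "f \<otimes> (inv f \<otimes> x) = x" using fG by (simp add: m_assoc[symmetric])
        ultimately show "x \<in> generate G (K \<union> Ms)" by simp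
      qed
    qed
  qed
qed

theorem mainTheorem8:
  fixes G :: "('a, 'b) monoid_scheme" and X :: "'a topology"
  assumes "Polish_group G X"
  shows "(\<forall>H. subgroup H G \<and> K_sigma X H \<longrightarrow> compactly_generated G X H) \<longleftrightarrow>
         (\<forall>H. subgroup H G \<and> countable H \<longrightarrow> compactly_generated G X H)"
proof
  assume A: "\<forall>H. subgroup H G \<and> K_sigma X H \<longrightarrow> compactly_generated G X H"
  show "\<forall>H. subgroup H G \<and> countable H \<longrightarrow> compactly_generated G X H"
  proof (intro allI impI)
    fix H assume "subgroup H G \<and> countable H"
    then show "compactly_generated G X H" using forward[OF assms A] by simp
  qed
next
  assume A: "\<forall>H. subgroup H G \<and> countable H \<longrightarrow> compactly_generated G X H"
  show "\<forall>H. subgroup H G \<and> K_sigma X H \<longrightarrow> compactly_generated G X H"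
  proof (intro allI impI)
    fix H assume "subgroup H G \<and> K_sigma X H"
    then show "compactly_generated G X H" using backward[OF assms A] by simp
  qed
qed

end
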